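(* Let $(A,+,\circ)$ be a finite left brace with cyclic additive group, let $g$ be an element of a transitive cycle base of $A$, and let $(A,\bullet)$ be the cycle set given by $a\bullet b:=\lambda_a(g)^{-}\circ b$. Let $H$ be the subgroup of $(A,\circ)$ such that $\mathrm{Ret}(A,\bullet)=A/H$ (namely $H=\{h\in A\mid\lambda_h(g)=g\}$). Then $H=\mathrm{Soc}(A)$.
   Context: A left brace is a set $A$ with two operations such that $(A,+)$ is an abelian group, $(A,\circ)$ is a group, and $a\circ(b+c)=a\circ b-a+a\circ c$. $\lambda_a(b):=-a+a\circ b$; $a\mapsto\lambda_a$ is a homomorphism $(A,\circ)\to\mathrm{Aut}(A,+)$. $a^{-}$ is the inverse of $a$ in $(A,\circ)$. $\mathrm{Soc}(A):=\{a\mid\lambda_a=\mathrm{id}_A\}$. A transitive cycle base is a single $\lambda$-orbit generating $(A,+)$. For a cycle set (left multiplications $\sigma_x$ bijective, $(x\cdot y)\cdot(x\cdot z)=(y\cdot x)\cdot(y\cdot z)$), $\mathrm{Ret}(X)$ is the quotient by $x\sim y\iff\sigma_x=\sigma_y$; for $(A,\bullet)$ its classes are the left cosets $a\circ H$. *)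

theory Defs
  imports "HOL-Algebra.Algebra"
begin

definition left_brace :: "'a monoid \<Rightarrow> 'a monoid \<Rightarrow> bool" where
  "left_brace P M \<longleftrightarrow> comm_group P \<and> group M \<and> carrier P = carrier M \<and>
     (\<forall>a\<in>carrier M. \<forall>b\<in>carrier P. \<forall>c\<in>carrier P.
        a \<otimes>\<^bsub>M\<^esub> (b \<otimes>\<^bsub>P\<^esub> c) =
        ((a \<otimes>\<^bsub>M\<^esub> b) \<otimes>\<^bsub>P\<^esub> inv\<^bsub>P\<^esub> a) \<otimes>\<^bsub>P\<^esub> (a \<otimes>\<^bsub>M\<^esub> c))"

definition brace_lambda :: "'a monoid \<Rightarrow> 'a monoid \<Rightarrow> 'a \<Rightarrow> 'a \<Rightarrow> 'a" where
  "brace_lambda P M a b = inv\<^bsub>P\<^esub> a \<otimes>\<^bsub>P\<^esub> (a \<otimes>\<^bsub>M\<^esub> b)"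

definition brace_socle :: "'a monoid \<Rightarrow> 'a monoid \<Rightarrow> 'a set" where
  "brace_socle P M = {a \<in> carrier M. \<forall>b\<in>carrier P. brace_lambda P M a b = b}"

definition transitive_cycle_base :: "'a monoid \<Rightarrow> 'a monoid \<Rightarrow> 'a set \<Rightarrow> bool" where
  "transitive_cycle_base P M B \<longleftrightarrow>
     (\<exists>y\<in>carrier P. B = (\<lambda>a. brace_lambda P M a y) ` carrier M) \<and>
     generate P B = carrier P"

end

theory Submission
  imports Defs
begin

lemma lb_basic:
  assumes "left_brace P M"
  shows "comm_group P" "group M" "carrier P = carrier M"
    "\<And>a b c. a \<in> carrier M \<Longrightarrow> b \<in> carrier P \<Longrightarrow> c \<in> carrier P \<Longrightarrow>
        a \<otimes>\<^bsub>M\<^esub> (b \<otimes>\<^bsub>P\<^esub> c) =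
        ((a \<otimes>\<^bsub>M\<^esub> b) \<otimes>\<^bsub>P\<^esub> inv\<^bsub>P\<^esub> a) \<otimes>\<^bsub>P\<^esub> (a \<otimes>\<^bsub>M\<^esub> c)"
  using assms unfolding left_brace_def by auto

lemma lam_closed:
  assumes "left_brace P M" "a \<in> carrier M" "b \<in> carrier P"
  shows "brace_lambda P M a b \<in> carrier P"
proof -
  interpret P: comm_group P using lb_basic[OF assms(1)] by simp
  interpret M: group M using lb_basic[OF assms(1)] by simp
  have e: "carrier P = carrier M" using lb_basic[OF assms(1)] by simp
  show ?thesis unfolding brace_lambda_def using assms e by auto
qed

lemma lam_hom:
  assumes "left_brace P M" "a \<in> carrier M"
  shows "brace_lambda P M a \<in> hom P P"
proof -
  interpret P: comm_group P using lb_basic[OF assms(1)] by simp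
  interpret M: group M using lb_basic[OF assms(1)] by simp
  have e: "carrier P = carrier M" using lb_basic[OF assms(1)] by simp
  show ?thesis
  proof (rule homI)
    fix x assume "x \<in> carrier P" then show "brace_lambda P M a x \<in> carrier P"
      by (rule lam_closed[OF assms(1,2)])
  next
    fix x y assume xy: "x \<in> carrier P" "y \<in> carrier P"
    have ax: "a \<otimes>\<^bsub>M\<^esub> x \<in> carrier P" and ay: "a \<otimes>\<^bsub>M\<^esub> y \<in> carrier P"
      and aP: "a \<in> carrier P" using xy assms(2) e M.m_closed by simp_all
    have "brace_lambda P M a (x \<otimes>\<^bsub>P\<^esub> y) =
       inv\<^bsub>P\<^esub> a \<otimes>\<^bsub>P\<^esub> (((a \<otimes>\<^bsub>M\<^esub> x) \<otimes>\<^bsub>P\<^esub> inv\<^bsub>P\<^esub> a) \<otimes>\<^bsub>P\<^esub> (a \<otimes>\<^bsub>M\<^esub> y))"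
      unfolding brace_lambda_def using lb_basic(4)[OF assms(1) assms(2) xy] by simp
    also have "\<dots> = (inv\<^bsub>P\<^esub> a \<otimes>\<^bsub>P\<^esub> (a \<otimes>\<^bsub>M\<^esub> x)) \<otimes>\<^bsub>P\<^esub> (inv\<^bsub>P\<^esub> a \<otimes>\<^bsub>P\<^esub> (a \<otimes>\<^bsub>M\<^esub> y))"
      using ax ay aP by (simp add: P.m_assoc)
    finally show "brace_lambda P M a (x \<otimes>\<^bsub>P\<^esub> y) =
       brace_lambda P M a x \<otimes>\<^bsub>P\<^esub> brace_lambda P M a y"
      unfolding brace_lambda_def .
  qed
qed

lemma one_eq:
  assumes "left_brace P M"
  shows "\<one>\<^bsub>M\<^esub> = \<one>\<^bsub>P\<^esub>"
proof -
  interpret P: comm_group P using lb_basic[OF assms(1)] by simp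
  interpret M: group M using lb_basic[OF assms(1)] by simp
  have e: "carrier P = carrier M" using lb_basic[OF assms(1)] by simp
  have "\<one>\<^bsub>M\<^esub> \<otimes>\<^bsub>M\<^esub> (\<one>\<^bsub>P\<^esub> \<otimes>\<^bsub>P\<^esub> \<one>\<^bsub>P\<^esub>) =
     ((\<one>\<^bsub>M\<^esub> \<otimes>\<^bsub>M\<^esub> \<one>\<^bsub>P\<^esub>) \<otimes>\<^bsub>P\<^esub> inv\<^bsub>P\<^esub> \<one>\<^bsub>M\<^esub>) \<otimes>\<^bsub>P\<^esub> (\<one>\<^bsub>M\<^esub> \<otimes>\<^bsub>M\<^esub> \<one>\<^bsub>P\<^esub>)"
    by (rule lb_basic(4)[OF assms(1)]) (use e in auto)
  moreover have "\<one>\<^bsub>M\<^esub> \<otimes>\<^bsub>M\<^esub> \<one>\<^bsub>P\<^esub> = \<one>\<^bsub>P\<^esub>" using e by (metis M.l_one P.one_closed)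
  ultimately have "\<one>\<^bsub>P\<^esub> = (\<one>\<^bsub>P\<^esub> \<otimes>\<^bsub>P\<^esub> inv\<^bsub>P\<^esub> \<one>\<^bsub>M\<^esub>) \<otimes>\<^bsub>P\<^esub> \<one>\<^bsub>P\<^esub>"
    by simp
  moreover have "inv\<^bsub>P\<^esub> \<one>\<^bsub>M\<^esub> \<in> carrier P" using e by (metis M.one_closed P.inv_closed)
  ultimately have "\<one>\<^bsub>P\<^esub> = inv\<^bsub>P\<^esub> \<one>\<^bsub>M\<^esub>" by simp
  then show ?thesis using e
    by (metis M.one_closed P.inv_inv P.inv_one)
qed

lemma lam_comp:
  assumes "left_brace P M" "a \<in> carrier M" "b \<in> carrier M" "c \<in> carrier P"
  shows "brace_lambda P M a (brace_lambda P M b c) = brace_lambda P M (a \<otimes>\<^bsub>M\<^esub> b) c"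
proof -
  interpret P: comm_group P using lb_basic[OF assms(1)] by simp
  interpret M: group M using lb_basic[OF assms(1)] by simp
  have e: "carrier P = carrier M" using lb_basic[OF assms(1)] by simp
  interpret h: group_hom P P "brace_lambda P M a"
    using lam_hom[OF assms(1,2)] by (simp add: group_hom_def group_hom_axioms_def P.is_group)
  have bP: "b \<in> carrier P" "b \<otimes>\<^bsub>M\<^esub> c \<in> carrier P" "a \<in> carrier P"
    "a \<otimes>\<^bsub>M\<^esub> b \<in> carrier P" "a \<otimes>\<^bsub>M\<^esub> (b \<otimes>\<^bsub>M\<^esub> c) \<in> carrier P"
    using assms e by auto
  have "brace_lambda P M a (brace_lambda P M b c) =
     brace_lambda P M a (inv\<^bsub>P\<^esub> b) \<otimes>\<^bsub>P\<^esub> brace_lambda P M a (b \<otimes>\<^bsub>M\<^esub> c)"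
    unfolding brace_lambda_def[of P M b] using bP by simp
  also have "brace_lambda P M a (inv\<^bsub>P\<^esub> b) = inv\<^bsub>P\<^esub> (brace_lambda P M a b)"
    using bP by simp
  also have "\<dots> = a \<otimes>\<^bsub>P\<^esub> inv\<^bsub>P\<^esub> (a \<otimes>\<^bsub>M\<^esub> b)"
    unfolding brace_lambda_def using bP by (simp add: P.inv_mult P.m_ac)
  finally have 1: "brace_lambda P M a (brace_lambda P M b c) =
     a \<otimes>\<^bsub>P\<^esub> inv\<^bsub>P\<^esub> (a \<otimes>\<^bsub>M\<^esub> b) \<otimes>\<^bsub>P\<^esub> (inv\<^bsub>P\<^esub> a \<otimes>\<^bsub>P\<^esub> (a \<otimes>\<^bsub>M\<^esub> (b \<otimes>\<^bsub>M\<^esub> c)))"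
    unfolding brace_lambda_def .
  have u: "inv\<^bsub>P\<^esub> (a \<otimes>\<^bsub>M\<^esub> b) \<in> carrier P" using bP by simp
  have "a \<otimes>\<^bsub>P\<^esub> inv\<^bsub>P\<^esub> (a \<otimes>\<^bsub>M\<^esub> b) \<otimes>\<^bsub>P\<^esub> (inv\<^bsub>P\<^esub> a \<otimes>\<^bsub>P\<^esub> (a \<otimes>\<^bsub>M\<^esub> (b \<otimes>\<^bsub>M\<^esub> c)))
     = inv\<^bsub>P\<^esub> (a \<otimes>\<^bsub>M\<^esub> b) \<otimes>\<^bsub>P\<^esub> ((a \<otimes>\<^bsub>P\<^esub> inv\<^bsub>P\<^esub> a) \<otimes>\<^bsub>P\<^esub> (a \<otimes>\<^bsub>M\<^esub> (b \<otimes>\<^bsub>M\<^esub> c)))"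
  proof -
    have c: "\<And>Y. Y \<in> carrier P \<Longrightarrow> a \<otimes>\<^bsub>P\<^esub> (inv\<^bsub>P\<^esub> a \<otimes>\<^bsub>P\<^esub> Y) = Y"
      using bP by (simp add: P.m_assoc[symmetric])
    show ?thesis using bP u by (simp add: P.m_ac c)
  qed
  also have "\<dots> = inv\<^bsub>P\<^esub> (a \<otimes>\<^bsub>M\<^esub> b) \<otimes>\<^bsub>P\<^esub> (a \<otimes>\<^bsub>M\<^esub> b \<otimes>\<^bsub>M\<^esub> c)"
    using bP assms e by (simp add: M.m_assoc)
  finally show ?thesis using 1 unfolding brace_lambda_def by simp
qed

lemma lam_one:
  assumes "left_brace P M" "c \<in> carrier P"
  shows "brace_lambda P M \<one>\<^bsub>M\<^esub> c = c"
proof -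
  interpret P: comm_group P using lb_basic[OF assms(1)] by simp
  interpret M: group M using lb_basic[OF assms(1)] by simp
  have e: "carrier P = carrier M" using lb_basic[OF assms(1)] by simp
  show ?thesis unfolding brace_lambda_def using one_eq[OF assms(1)] assms e
    by (metis M.l_one P.inv_one P.l_one)
qed

lemma cyclic_hom_pow:
  assumes "cyclic_group P" "group P" "f \<in> hom P P"
  shows "\<exists>m::int. \<forall>x\<in>carrier P. f x = x [^]\<^bsub>P\<^esub> m"
proof -
  interpret P: group P by fact
  obtain c where c: "c \<in> carrier P" "carrier P = range (\<lambda>n::int. c [^]\<^bsub>P\<^esub> n)"
    using assms(1) P.cyclic_group by blast
  have "f c \<in> carrier P" using assms(3) c(1) by (auto simp: hom_def)
  then have "f c \<in> range (\<lambda>n::int. c [^]\<^bsub>P\<^esub> n)" using c(2) by blast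
  then obtain m where m: "f c = c [^]\<^bsub>P\<^esub> (m::int)" by blast
  have "\<forall>x\<in>carrier P. f x = x [^]\<^bsub>P\<^esub> m"
  proof
    fix x assume "x \<in> carrier P"
    then have "x \<in> range (\<lambda>n::int. c [^]\<^bsub>P\<^esub> n)" using c(2) by blast
    then obtain k where k: "x = c [^]\<^bsub>P\<^esub> (k::int)" by blast
    have "f x = (f c) [^]\<^bsub>P\<^esub> k" unfolding k by (rule hom_int_pow[OF assms(3) c(1) assms(2) assms(2)])
    also have "\<dots> = c [^]\<^bsub>P\<^esub> (m * k)" unfolding m by (rule P.int_pow_pow[OF c(1)])
    also have "\<dots> = c [^]\<^bsub>P\<^esub> (k * m)" by (simp only: mult.commute)
    also have "\<dots> = x [^]\<^bsub>P\<^esub> m" unfolding k by (rule P.int_pow_pow[OF c(1), symmetric])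
    finally show "f x = x [^]\<^bsub>P\<^esub> m" .
  qed
  then show ?thesis by blast
qed

theorem mainTheorem3:
  fixes P M :: "'a monoid" and B :: "'a set" and g :: 'a
  assumes "left_brace P M"
    and "finite (carrier P)"
    and "cyclic_group P"
    and "transitive_cycle_base P M B"
    and "g \<in> B"
  shows "{h \<in> carrier M. brace_lambda P M h g = g} = brace_socle P M"
proof -
  note lb = assms(1)
  interpret P: comm_group P using lb_basic[OF lb] by simp
  interpret M: group M using lb_basic[OF lb] by simp
  have e: "carrier P = carrier M" using lb_basic[OF lb] by simp
  obtain y where y: "y \<in> carrier P" "B = (\<lambda>a. brace_lambda P M a y) ` carrier M"
    and gen: "generate P B = carrier P"
    using assms(4) unfolding transitive_cycle_base_def by blast
  obtain a0 where a0: "a0 \<in> carrier M" "g = brace_lambda P M a0 y" using assms(5) y by auto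
  have gP: "g \<in> carrier P" using a0 y lam_closed[OF lb] by simp
  have powrep: "\<exists>m::int. \<forall>x\<in>carrier P. brace_lambda P M a x = x [^]\<^bsub>P\<^esub> m"
    if "a \<in> carrier M" for a
    using cyclic_hom_pow[OF assms(3) P.is_group lam_hom[OF lb that]] .
  have "h \<in> brace_socle P M" if h: "h \<in> carrier M" "brace_lambda P M h g = g" for h
  proof -
    obtain m where m: "\<forall>x\<in>carrier P. brace_lambda P M h x = x [^]\<^bsub>P\<^esub> (m::int)"
      using powrep h(1) by blast
    define S where "S = {x \<in> carrier P. brace_lambda P M h x = x}"
    have ghh: "group_hom P P (brace_lambda P M h)"
      by (simp add: group_hom_def group_hom_axioms_def P.is_group lam_hom[OF lb h(1)])
    have sub: "subgroup S P"
    proof (rule P.subgroupI)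
      show "S \<subseteq> carrier P" unfolding S_def by auto
      show "S \<noteq> {}" using gP h unfolding S_def by auto
    next
      fix x assume "x \<in> S" then show "inv\<^bsub>P\<^esub> x \<in> S" unfolding S_def
        using group_hom.hom_inv[OF ghh] by auto
    next
      fix x z assume "x \<in> S" "z \<in> S" then show "x \<otimes>\<^bsub>P\<^esub> z \<in> S" unfolding S_def
        using hom_mult[OF lam_hom[OF lb h(1)]] by auto
    qed
    have "B \<subseteq> S"
    proof
      fix b assume "b \<in> B"
      then obtain a where a: "a \<in> carrier M" "b = brace_lambda P M a y" using y by auto
      have "y = brace_lambda P M (inv\<^bsub>M\<^esub> a0) g"
        using a0 lam_comp[OF lb, of "inv\<^bsub>M\<^esub> a0" a0 y] y lam_one[OF lb y(1)] by simp
      then have b: "b = brace_lambda P M (a \<otimes>\<^bsub>M\<^esub> inv\<^bsub>M\<^esub> a0) g"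
        using a lam_comp[OF lb, of a "inv\<^bsub>M\<^esub> a0" g] a0 gP by simp
      obtain k where k: "\<forall>x\<in>carrier P. brace_lambda P M (a \<otimes>\<^bsub>M\<^esub> inv\<^bsub>M\<^esub> a0) x = x [^]\<^bsub>P\<^esub> (k::int)"
        using powrep a(1) a0(1) by blast
      have bk: "b = g [^]\<^bsub>P\<^esub> k" using b k gP by simp
      have gm: "g [^]\<^bsub>P\<^esub> m = g" using m h gP by simp
      have "brace_lambda P M h b = (g [^]\<^bsub>P\<^esub> k) [^]\<^bsub>P\<^esub> m" using m bk gP by simp
      also have "\<dots> = (g [^]\<^bsub>P\<^esub> m) [^]\<^bsub>P\<^esub> k" using gP P.int_pow_pow by (simp add: mult.commute)
      also have "\<dots> = b" using gm bk by simp
      finally show "b \<in> S" unfolding S_def using bk gP by simp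
    qed
    then have "carrier P \<subseteq> S" using P.generate_subgroup_incl[OF _ sub] gen by blast
    then show ?thesis unfolding brace_socle_def S_def using h by auto
  qed
  moreover have "h \<in> carrier M \<and> brace_lambda P M h g = g" if "h \<in> brace_socle P M" for h
    using that gP unfolding brace_socle_def by auto
  ultimately show ?thesis by blast
qed

end
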